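(* There exist capacitated network graphs $G=(V,E)$ with arbitrarily many vertices, together with sets $\mathcal{D}$ of possible demand matrices, such that every per-destination routing $\phi$ on $G$ satisfies $PERF(\phi,\mathcal{D})=\Omega(|V|)$; i.e., the performance ratio of the optimal oblivious per-destination routing is $\Omega(|V|)$.
   Context: A network is a directed graph $G=(V,E)$ with a positive (possibly arbitrarily large) capacity $c_e$ on each edge $e$. A routing configuration $\phi$ assigns to each destination $t\in V$ and each edge $e=(u,v)\in E$ a value $\phi_t(e)\ge 0$, the fraction of the flow destined to $t$ entering $u$ that is forwarded on $e$, with $\sum_{e=(u,v)\in E}\phi_t(e)=1$ for every $u\neq t$. It is a per-destination (PD) routing if for every $t\in V$ and every directed cycle $C$ of $G$ there is an edge $e\in C$ with $\phi_t(e)=0$. For a PD routing, $f_{st}(s)=1$ and $f_{st}(v)=\sum_{e=(u,v)\in E}f_{st}(u)\phi_t(e)$ for $v\ne s$. For a demand matrix $D=(d_{st})$ with $d_{st}\ge0$, $MxLU(\phi,D)=\max_{e=(u,v)\in E}\frac{\sum_{s,t}d_{st}f_{st}(u)\phi_t(e)}{c_e}$, $OPTU(D)=\min_{\phi\text{ PD routing}}MxLU(\phi,D)$, and $PERF(\phi,\mathcal{D})=\max_{D\in\mathcal{D}}MxLU(\phi,D)/OPTU(D)$. *)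

theory Defs
  imports "HOL-Analysis.Analysis"
begin

definition network :: "nat set \<Rightarrow> (nat \<times> nat) set \<Rightarrow> (nat \<times> nat \<Rightarrow> real) \<Rightarrow> bool" where
  "network V E c \<longleftrightarrow> finite V \<and> E \<subseteq> V \<times> V \<and> (\<forall>e\<in>E. c e > 0)"

definition dcycle :: "(nat \<times> nat) set \<Rightarrow> nat list \<Rightarrow> bool" where
  "dcycle E vs \<longleftrightarrow> vs \<noteq> [] \<and> distinct vs \<and>
     (\<forall>i<length vs. (vs!i, vs!((i+1) mod length vs)) \<in> E)"

text \<open>Routing configuration: phi t e is the fraction of traffic to t forwarded on e.\<close>
definition routing_config :: "nat set \<Rightarrow> (nat \<times> nat) set \<Rightarrow> (nat \<Rightarrow> nat \<times> nat \<Rightarrow> real) \<Rightarrow> bool" where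
  "routing_config V E phi \<longleftrightarrow>
     (\<forall>t\<in>V. \<forall>e\<in>E. phi t e \<ge> 0) \<and>
     (\<forall>t\<in>V. \<forall>u\<in>V. u \<noteq> t \<longrightarrow> (\<Sum>e\<in>{e\<in>E. fst e = u}. phi t e) = 1)"

definition PD_routing :: "nat set \<Rightarrow> (nat \<times> nat) set \<Rightarrow> (nat \<Rightarrow> nat \<times> nat \<Rightarrow> real) \<Rightarrow> bool" where
  "PD_routing V E phi \<longleftrightarrow> routing_config V E phi \<and>
     (\<forall>t\<in>V. \<forall>vs. dcycle E vs \<longrightarrow>
        (\<exists>i<length vs. phi t (vs!i, vs!((i+1) mod length vs)) = 0))"

text \<open>f_{st}: the (unique, for PD routings) function with f_{st}(s) = 1 and
  f_{st}(v) = sum over edges (u,v) of f_{st}(u) phi_t(u,v) for v \<noteq> s (zero outside V).\<close>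
definition flow :: "nat set \<Rightarrow> (nat \<times> nat) set \<Rightarrow> (nat \<Rightarrow> nat \<times> nat \<Rightarrow> real) \<Rightarrow> nat \<Rightarrow> nat \<Rightarrow> nat \<Rightarrow> real" where
  "flow V E phi s t = (THE f. f s = 1 \<and> (\<forall>v. v \<notin> V \<longrightarrow> f v = 0) \<and>
      (\<forall>v\<in>V. v \<noteq> s \<longrightarrow> f v = (\<Sum>e\<in>{e\<in>E. snd e = v}. f (fst e) * phi t e)))"

definition MxLU :: "nat set \<Rightarrow> (nat \<times> nat) set \<Rightarrow> (nat \<times> nat \<Rightarrow> real) \<Rightarrow> (nat \<Rightarrow> nat \<times> nat \<Rightarrow> real)
                    \<Rightarrow> (nat \<Rightarrow> nat \<Rightarrow> real) \<Rightarrow> real" where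
  "MxLU V E c phi D = Max ((\<lambda>e. (\<Sum>s\<in>V. \<Sum>t\<in>V. D s t * flow V E phi s t (fst e) * phi t e) / c e) ` E)"

definition demand_matrix :: "nat set \<Rightarrow> (nat \<Rightarrow> nat \<Rightarrow> real) \<Rightarrow> bool" where
  "demand_matrix V D \<longleftrightarrow> (\<forall>s\<in>V. \<forall>t\<in>V. D s t \<ge> 0)"

definition OPTU :: "nat set \<Rightarrow> (nat \<times> nat) set \<Rightarrow> (nat \<times> nat \<Rightarrow> real) \<Rightarrow> (nat \<Rightarrow> nat \<Rightarrow> real) \<Rightarrow> real" where
  "OPTU V E c D = Inf {MxLU V E c phi D | phi. PD_routing V E phi}"

definition PERF :: "nat set \<Rightarrow> (nat \<times> nat) set \<Rightarrow> (nat \<times> nat \<Rightarrow> real) \<Rightarrow> (nat \<Rightarrow> nat \<times> nat \<Rightarrow> real)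
                    \<Rightarrow> (nat \<Rightarrow> nat \<Rightarrow> real) set \<Rightarrow> ereal" where
  "PERF V E c phi DD = (SUP D\<in>DD. ereal (MxLU V E c phi D / OPTU V E c D))"

end

theory Submission
  imports Defs
begin


definition cwalk :: "('a\<times>'a) set \<Rightarrow> 'a list \<Rightarrow> bool" where
  "cwalk R vs \<longleftrightarrow> vs \<noteq> [] \<and> (\<forall>i<length vs. (vs!i, vs!((i+1) mod length vs)) \<in> R)"

lemma cwalk_distinct: "cwalk R vs \<Longrightarrow> \<exists>ws. cwalk R ws \<and> distinct ws"
proof (induction "length vs" arbitrary: vs rule: less_induct)
  case less
  show ?case
  proof (cases "distinct vs")
    case True then show ?thesis using less.prems by blast
  next
    case False
    then obtain i j where ij: "i < j" "j < length vs" "vs!i = vs!j"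
      by (metis distinct_conv_nth linorder_neqE_nat)
    define ws where "ws = take (j-i) (drop i vs)"
    have len: "length ws = j - i" using ij by (simp add: ws_def)
    have nth: "\<And>k. k < j - i \<Longrightarrow> ws!k = vs!(i+k)" using ij by (simp add: ws_def)
    have W: "\<And>k. k < length vs \<Longrightarrow> (vs!k, vs!((k+1) mod length vs)) \<in> R"
      using less.prems by (simp add: cwalk_def)
    have "cwalk R ws"
      unfolding cwalk_def
    proof (intro conjI allI impI)
      show "ws \<noteq> []" using len ij by auto
    next
      fix k assume k: "k < length ws"
      show "(ws!k, ws!((k+1) mod length ws)) \<in> R"
      proof (cases "k+1 < j - i")
        case True
        have "(vs!(i+k), vs!((i+k+1) mod length vs)) \<in> R" using W[of "i+k"] k len ij by simp
        moreover have "(i+k+1) mod length vs = i+k+1" using True ij by simp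
        ultimately show ?thesis using True k len nth by simp
      next
        case False
        then have kk: "k+1 = j - i" using k len by simp
        have "(vs!(i+k), vs!((i+k+1) mod length vs)) \<in> R" using W[of "i+k"] k len ij by simp
        moreover have "(i+k+1) mod length vs = j" using kk ij by simp
        moreover have "(k+1) mod length ws = 0" using kk len by simp
        ultimately show ?thesis using kk k len nth[of 0] nth[of k] ij by simp
      qed
    qed
    moreover have "length ws < length vs" using len ij by simp
    ultimately show ?thesis using less.hyps by blast
  qed
qed

lemma trancl_cwalk: assumes "(x,x) \<in> R\<^sup>+" shows "\<exists>vs. cwalk R vs"
proof -
  obtain n where n: "n > 0" "(x,x) \<in> R^^n" using assms trancl_power by blast
  then obtain f where f: "f 0 = x" "f n = x" "\<forall>i<n. (f i, f (Suc i)) \<in> R"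
    using relpow_fun_conv by metis
  define vs where "vs = map f [0..<n]"
  have "cwalk R vs" unfolding cwalk_def
  proof (intro conjI allI impI)
    show "vs \<noteq> []" using n by (simp add: vs_def)
  next
    fix i assume i: "i < length vs"
    show "(vs!i, vs!((i+1) mod length vs)) \<in> R"
    proof (cases "i+1 < n")
      case True thus ?thesis using i f by (simp add: vs_def)
    next
      case False
      then have "i+1 = n" using i by (simp add: vs_def)
      moreover have "(f i, f (Suc i)) \<in> R" using f i by (simp add: vs_def)
      ultimately show ?thesis using i f n by (simp add: vs_def)
    qed
  qed
  thus ?thesis by blast
qed

lemma PD_acyclic:
  assumes PD: "PD_routing V E phi" and t: "t \<in> V"
  shows "acyclic {e\<in>E. phi t e \<noteq> 0}"
proof (rule ccontr)
  let ?R = "{e\<in>E. phi t e \<noteq> 0}"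
  assume "\<not> acyclic ?R"
  then obtain x where x: "(x,x) \<in> ?R\<^sup>+" by (auto simp: acyclic_def)
  obtain vs where vs: "cwalk ?R vs" using trancl_cwalk[OF x] by (elim exE)
  obtain ws where ws: "cwalk ?R ws" "distinct ws" using cwalk_distinct[OF vs] by (elim exE conjE)
  then have "dcycle E ws" unfolding cwalk_def dcycle_def by blast
  then obtain i where "i < length ws" "phi t (ws!i, ws!((i+1) mod length ws)) = 0"
    using PD t unfolding PD_routing_def by blast
  thus False using ws unfolding cwalk_def by blast
qed



definition flowP where
  "flowP V E phi s t f \<longleftrightarrow> f s = 1 \<and> (\<forall>v. v \<notin> V \<longrightarrow> f v = 0) \<and>
      (\<forall>v\<in>V. v \<noteq> s \<longrightarrow> f v = (\<Sum>e\<in>{e\<in>E. snd e = v}. f (fst e) * phi t e))"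

lemma flow_alt: "flow V E phi s t = (THE f. flowP V E phi s t f)"
  by (simp add: flow_def flowP_def)

lemma PD_wf:
  assumes net: "network V E c" and PD: "PD_routing V E phi" and t: "t \<in> V"
  shows "wf {e\<in>E. phi t e \<noteq> 0}"
proof (rule finite_acyclic_wf)
  have "finite E" using net finite_subset[of E "V\<times>V"] by (auto simp: network_def)
  thus "finite {e\<in>E. phi t e \<noteq> 0}" by simp
  show "acyclic {e\<in>E. phi t e \<noteq> 0}" using PD_acyclic[OF PD t] .
qed

lemma flow_unique:
  assumes net: "network V E c" and PD: "PD_routing V E phi" and t: "t \<in> V"
    and f: "flowP V E phi s t f" and g: "flowP V E phi s t g"
  shows "f = g"
proof
  fix v
  let ?R = "{e\<in>E. phi t e \<noteq> 0}"
  show "f v = g v"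
  proof (induction v rule: wf_induct_rule[OF PD_wf[OF net PD t]])
    case (1 x)
    show ?case
    proof (cases "x \<in> V \<and> x \<noteq> s")
      case True
      have "(\<Sum>e\<in>{e\<in>E. snd e = x}. f (fst e) * phi t e) = (\<Sum>e\<in>{e\<in>E. snd e = x}. g (fst e) * phi t e)"
      proof (rule sum.cong)
        fix e assume e: "e \<in> {e\<in>E. snd e = x}"
        show "f (fst e) * phi t e = g (fst e) * phi t e"
        proof (cases "phi t e = 0")
          case False
          then have "(fst e, x) \<in> ?R" using e by (cases e) auto
          then show ?thesis using 1 by simp
        qed simp
      qed simp
      then show ?thesis using True f g by (simp add: flowP_def)
    next
      case False
      then show ?thesis using f g by (auto simp: flowP_def)
    qed
  qed
qed

lemma flow_exists:
  assumes net: "network V E c" and PD: "PD_routing V E phi" and t: "t \<in> V" and s: "s \<in> V"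
  shows "\<exists>f. flowP V E phi s t f \<and> (\<forall>v. f v \<ge> 0)"
proof -
  let ?R = "{e\<in>E. phi t e \<noteq> 0}"
  have wf: "wf ?R" using PD_wf[OF net PD t] .
  define F where "F = (\<lambda>g v. if v \<notin> V then 0 else if v = s then 1 else
                         (\<Sum>e\<in>{e\<in>E. snd e = v}. (g (fst e)::real) * phi t e))"
  have adm: "adm_wf ?R F" unfolding adm_wf_def
  proof (intro allI impI)
    fix f g :: "nat \<Rightarrow> real" and x
    assume H: "\<forall>z. (z, x) \<in> ?R \<longrightarrow> f z = g z"
    have "(\<Sum>e\<in>{e\<in>E. snd e = x}. f (fst e) * phi t e) = (\<Sum>e\<in>{e\<in>E. snd e = x}. g (fst e) * phi t e)"
    proof (rule sum.cong)
      fix e assume e: "e \<in> {e\<in>E. snd e = x}"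
      show "f (fst e) * phi t e = g (fst e) * phi t e"
      proof (cases "phi t e = 0")
        case False
        then have "(fst e, x) \<in> ?R" using e by (cases e) auto
        then show ?thesis using H by simp
      qed simp
    qed simp
    then show "F f x = F g x" by (simp add: F_def)
  qed
  define f where "f = wfrec ?R F"
  have fp: "f = F f" unfolding f_def using wfrec_fixpoint[OF wf adm] .
  have P: "flowP V E phi s t f"
    unfolding flowP_def using s by (subst (1 2 3) fp, simp add: F_def)
  have nn: "f v \<ge> 0" for v
  proof (induction v rule: wf_induct_rule[OF wf])
    case (1 x)
    have "(\<Sum>e\<in>{e\<in>E. snd e = x}. f (fst e) * phi t e) \<ge> 0"
    proof (rule sum_nonneg)
      fix e assume e: "e \<in> {e\<in>E. snd e = x}"
      show "f (fst e) * phi t e \<ge> 0"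
      proof (cases "phi t e = 0")
        case False
        then have "(fst e, x) \<in> ?R" using e by (cases e) auto
        moreover have "phi t e \<ge> 0" using PD t e by (auto simp: PD_routing_def routing_config_def)
        ultimately show ?thesis using 1 by simp
      qed simp
    qed
    then show ?case by (subst fp, simp add: F_def)
  qed
  show ?thesis using P nn by blast
qed

lemma flow_props:
  assumes net: "network V E c" and PD: "PD_routing V E phi" and t: "t \<in> V" and s: "s \<in> V"
  shows "flowP V E phi s t (flow V E phi s t)" "\<And>v. flow V E phi s t v \<ge> 0"
proof -
  obtain f where f: "flowP V E phi s t f" "\<forall>v. f v \<ge> 0" using flow_exists[OF assms] by blast
  have "flow V E phi s t = f" unfolding flow_alt
    using f(1) flow_unique[OF net PD t] by blast
  then show "flowP V E phi s t (flow V E phi s t)" "\<And>v. flow V E phi s t v \<ge> 0" using f by auto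
qed

lemma flow_eq:
  assumes net: "network V E c" and PD: "PD_routing V E phi" and t: "t \<in> V" and s: "s \<in> V"
    and g: "flowP V E phi s t g"
  shows "flow V E phi s t = g"
  using flow_unique[OF net PD t flow_props(1)[OF assms(1-4)] g] .



definition VV :: "nat \<Rightarrow> nat set" where "VV n = {0..n}"
definition EE :: "nat \<Rightarrow> (nat\<times>nat) set" where "EE n = {(a,b). a \<in> VV n \<and> b \<in> VV n \<and> a \<noteq> b}"
definition DM :: "nat \<Rightarrow> nat \<Rightarrow> nat \<Rightarrow> nat \<Rightarrow> real" where
  "DM n u = (\<lambda>s t. if s = u \<and> t = 0 then real n else 0)"

lemma finVV[simp]: "finite (VV n)" by (simp add: VV_def)

lemma net: "network (VV n) (EE n) (\<lambda>_. 1)"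
  by (auto simp: network_def VV_def EE_def)

lemma finE: "finite (EE n)"
  using net[of n] finite_subset[of "EE n" "VV n \<times> VV n"] by (auto simp: network_def)

lemma out_set: "{e\<in>EE n. fst e = a} = (\<lambda>b. (a,b)) ` (VV n - {a})" if "a \<in> VV n"
  using that by (auto simp: EE_def)

lemma in_set: "{e\<in>EE n. snd e = a} = (\<lambda>b. (b,a)) ` (VV n - {a})" if "a \<in> VV n"
  using that by (auto simp: EE_def)

lemma out_sum: "a \<in> VV n \<Longrightarrow> (\<Sum>e\<in>{e\<in>EE n. fst e = a}. g e) = (\<Sum>b\<in>VV n - {a}. g (a,b))"
  by (simp add: out_set sum.reindex inj_on_def)

lemma in_sum: "a \<in> VV n \<Longrightarrow> (\<Sum>e\<in>{e\<in>EE n. snd e = a}. g e) = (\<Sum>b\<in>VV n - {a}. g (b,a))"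
  by (simp add: in_set sum.reindex inj_on_def)

lemma cardVV: "card (VV n) = n + 1" by (simp add: VV_def)

lemma card_rm: "a \<in> VV n \<Longrightarrow> card (VV n - {a}) = n"
  by (simp add: card_Diff_singleton cardVV)

lemma out_card: "a \<in> VV n \<Longrightarrow> card {e\<in>EE n. fst e = a} = n"
proof -
  assume a: "a \<in> VV n"
  have "card ((\<lambda>b. (a,b)) ` (VV n - {a})) = card (VV n - {a})"
    by (rule card_image) (simp add: inj_on_def)
  then show ?thesis using out_set[OF a] card_rm[OF a] by simp
qed

lemma MxLU_DM:
  assumes u: "u \<in> VV n"
  shows "MxLU (VV n) (EE n) (\<lambda>_. 1) phi (DM n u) =
         Max ((\<lambda>e. real n * flow (VV n) (EE n) phi u 0 (fst e) * phi 0 e) ` EE n)"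
proof -
  have "\<And>e. (\<Sum>s\<in>VV n. \<Sum>t\<in>VV n. DM n u s t * flow (VV n) (EE n) phi s t (fst e) * phi t e)
        = real n * flow (VV n) (EE n) phi u 0 (fst e) * phi 0 e"
  proof -
    fix e
    define X where "X = real n * flow (VV n) (EE n) phi u 0 (fst e) * phi 0 e"
    have A: "\<And>s t. DM n u s t * flow (VV n) (EE n) phi s t (fst e) * phi t e = (if s = u then (if t = 0 then X else 0) else 0)"
      by (simp add: DM_def X_def)
    have z: "0 \<in> VV n" by (simp add: VV_def)
    have B: "\<And>s. (\<Sum>t\<in>VV n. (if s = u then (if t = 0 then X else 0) else 0)) = (if s = u then X else 0)"
      using z by (simp add: sum.delta)
    have "(\<Sum>s\<in>VV n. \<Sum>t\<in>VV n. DM n u s t * flow (VV n) (EE n) phi s t (fst e) * phi t e)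
       = (\<Sum>s\<in>VV n. if s = u then X else 0)" by (simp only: A B)
    also have "\<dots> = X" using u by (simp add: sum.delta)
    finally show "?thesis e" by (simp add: X_def)
  qed
  then show ?thesis by (simp add: MxLU_def)
qed

lemma pot_PD:
  fixes h :: "nat \<Rightarrow> nat"
  assumes "\<forall>e\<in>E. phi t e \<noteq> 0 \<longrightarrow> h (fst e) > h (snd e)" and "dcycle E vs"
  shows "\<exists>i<length vs. phi t (vs!i, vs!((i+1) mod length vs)) = 0"
proof -
  have ne: "vs \<noteq> []" using assms(2) by (simp add: dcycle_def)
  let ?m = "Min (h ` set vs)"
  have "?m \<in> h ` set vs" using ne by simp
  then obtain x where x: "x \<in> set vs" "h x = ?m" by auto
  then obtain i where i: "i < length vs" "vs!i = x" by (auto simp: in_set_conv_nth)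
  let ?j = "(i+1) mod length vs"
  have j: "?j < length vs" using ne by simp
  have E: "(vs!i, vs!?j) \<in> E" using assms(2) i(1) unfolding dcycle_def by blast
  have "h (vs!?j) \<ge> ?m" using j by simp
  then have "phi t (vs!i, vs!?j) = 0" using assms(1) E i x by fastforce
  then show ?thesis using i by blast
qed

definition psi :: "nat \<Rightarrow> nat \<Rightarrow> nat \<Rightarrow> nat\<times>nat \<Rightarrow> real" where
  "psi n u t e = (if t = 0 \<and> fst e = u then 1 / real n else if fst e = t then 0 else if snd e = t then 1 else 0)"

lemma psi_PD:
  assumes n: "n \<ge> 1" and u: "u \<in> VV n" "u \<noteq> 0"
  shows "PD_routing (VV n) (EE n) (psi n u)"
  unfolding PD_routing_def routing_config_def
proof (intro conjI ballI allI impI)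
  fix t e assume "t \<in> VV n" "e \<in> EE n"
  show "psi n u t e \<ge> 0" by (simp add: psi_def)
next
  fix t a assume t: "t \<in> VV n" and a: "a \<in> VV n" and at: "a \<noteq> t"
  show "(\<Sum>e\<in>{e\<in>EE n. fst e = a}. psi n u t e) = 1"
  proof (cases "t = 0 \<and> a = u")
    case True
    then have "(\<Sum>e\<in>{e\<in>EE n. fst e = a}. psi n u t e) = (\<Sum>e\<in>{e\<in>EE n. fst e = a}. 1 / real n)"
      by (intro sum.cong refl) (simp add: psi_def)
    also have "\<dots> = 1" using out_card[OF a] n by simp
    finally show ?thesis .
  next
    case False
    have "(\<Sum>e\<in>{e\<in>EE n. fst e = a}. psi n u t e) = (\<Sum>b\<in>VV n - {a}. psi n u t (a,b))"
      using out_sum[OF a] .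
    also have "\<dots> = (\<Sum>b\<in>VV n - {a}. if b = t then 1 else 0)"
      using False at by (intro sum.cong) (auto simp: psi_def)
    also have "\<dots> = 1" using t at by (simp add: sum.delta)
    finally show ?thesis .
  qed
next
  fix t vs assume t: "t \<in> VV n" and dc: "dcycle (EE n) vs"
  define h where "h x = (if x = t then 0 else if t = 0 \<and> x = u then 2 else (1::nat))" for x
  have "\<forall>e\<in>EE n. psi n u t e \<noteq> 0 \<longrightarrow> h (fst e) > h (snd e)"
  proof (intro ballI impI)
    fix e assume e: "e \<in> EE n" "psi n u t e \<noteq> 0"
    obtain a b where ab: "e = (a,b)" by (cases e)
    have ne: "a \<noteq> b" using e(1) ab by (simp add: EE_def)
    show "h (fst e) > h (snd e)"
    proof (cases "t = 0 \<and> a = u")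
      case True
      then show ?thesis using ab ne u(2) by (simp add: h_def)
    next
      case False
      then have "a \<noteq> t \<and> b = t" using e(2) ab by (simp add: psi_def split: if_split_asm)
      then show ?thesis using ab by (simp add: h_def)
    qed
  qed
  show "\<exists>i<length vs. psi n u t (vs!i, vs!((i+1) mod length vs)) = 0"
    by (rule pot_PD[where h=h, OF _ dc]) (rule \<open>\<forall>e\<in>EE n. psi n u t e \<noteq> 0 \<longrightarrow> h (fst e) > h (snd e)\<close>)
qed



lemma zeroV[simp]: "0 \<in> VV n" by (simp add: VV_def)

lemma flow_self:
  assumes PD: "PD_routing (VV n) (EE n) phi" and u: "u \<in> VV n"
  shows "flow (VV n) (EE n) phi u 0 u = 1"
  using flow_props(1)[OF net PD zeroV u] by (simp add: flowP_def)

lemma MxLU_ge: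
  assumes u: "u \<in> VV n" and e: "e \<in> EE n"
  shows "MxLU (VV n) (EE n) (\<lambda>_. 1) phi (DM n u) \<ge> real n * flow (VV n) (EE n) phi u 0 (fst e) * phi 0 e"
  unfolding MxLU_DM[OF u] using e finE by (intro Max_ge) auto

lemma sink:
  assumes PD: "PD_routing (VV n) (EE n) phi" and n: "n \<ge> 1"
  shows "\<exists>u\<in>VV n. u \<noteq> 0 \<and> phi 0 (u,0) = 1"
proof -
  let ?R = "{e\<in>EE n. phi 0 e \<noteq> 0}"
  have "finite ?R" using finE by simp
  moreover have "acyclic ?R" using PD_acyclic[OF PD zeroV] .
  ultimately have wf: "wf (?R\<inverse>)" by (rule finite_acyclic_wf_converse)
  have "1 \<in> VV n - {0}" using n by (simp add: VV_def)
  then obtain z where z: "z \<in> VV n - {0}" "\<And>y. (y, z) \<in> ?R\<inverse> \<Longrightarrow> y \<notin> VV n - {0}"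
    by (rule wfE_min[OF wf]) blast
  have zV: "z \<in> VV n" and z0: "z \<noteq> 0" using z(1) by auto
  have one: "(\<Sum>e\<in>{e\<in>EE n. fst e = z}. phi 0 e) = 1"
    using PD zV z0 by (auto simp: PD_routing_def routing_config_def)
  have "(\<Sum>e\<in>{e\<in>EE n. fst e = z}. phi 0 e) = (\<Sum>b\<in>VV n - {z}. phi 0 (z,b))"
    using out_sum[OF zV] .
  also have "\<dots> = (\<Sum>b\<in>VV n - {z}. if b = 0 then phi 0 (z,b) else 0)"
  proof (rule sum.cong)
    fix b assume b: "b \<in> VV n - {z}"
    show "phi 0 (z,b) = (if b = 0 then phi 0 (z,b) else 0)"
    proof (cases "b = 0")
      case False
      have "(z,b) \<in> EE n" using b zV by (auto simp: EE_def)
      then show ?thesis using z(2)[of b] b False by auto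
    qed simp
  qed simp
  also have "\<dots> = phi 0 (z,0)" using z0 by (simp add: sum.delta)
  finally show ?thesis using one zV z0 by auto
qed

lemma lower_n:
  assumes PD: "PD_routing (VV n) (EE n) phi" and u: "u \<in> VV n" "u \<noteq> 0" and p: "phi 0 (u,0) = 1"
  shows "MxLU (VV n) (EE n) (\<lambda>_. 1) phi (DM n u) \<ge> real n"
proof -
  have "(u,0) \<in> EE n" using u by (auto simp: EE_def)
  from MxLU_ge[OF u(1) this, of phi] show ?thesis using flow_self[OF PD u(1)] p by simp
qed

lemma lower_1:
  assumes PD: "PD_routing (VV n) (EE n) phi" and u: "u \<in> VV n" "u \<noteq> 0" and n: "n \<ge> 1"
  shows "MxLU (VV n) (EE n) (\<lambda>_. 1) phi (DM n u) \<ge> 1"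
proof -
  let ?S = "{e\<in>EE n. fst e = u}"
  have one: "(\<Sum>e\<in>?S. phi 0 e) = 1"
    using PD u by (auto simp: PD_routing_def routing_config_def)
  have cS: "card ?S = n" using out_card[OF u(1)] .
  have "\<exists>e\<in>?S. phi 0 e \<ge> 1 / real n"
  proof (rule ccontr)
    assume "\<not> ?thesis"
    then have lt: "\<forall>e\<in>?S. phi 0 e < 1 / real n" by auto
    have fin: "finite ?S" using finE by simp
    have "(u,0) \<in> ?S" using u by (simp add: EE_def VV_def)
    then have ne: "?S \<noteq> {}" by blast
    have "(\<Sum>e\<in>?S. phi 0 e) < (\<Sum>e\<in>?S. 1 / real n)"
      by (rule sum_strict_mono[OF fin ne]) (use lt in blast)
    also have "\<dots> = 1" using cS n by simp
    finally show False using one by simp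
  qed
  then obtain e where e: "e \<in> EE n" "fst e = u" "phi 0 e \<ge> 1 / real n" by auto
  have "real n * phi 0 e \<ge> real n * (1 / real n)"
    using e(3) by (intro mult_left_mono) auto
  then have "real n * phi 0 e \<ge> 1" using n by simp
  then show ?thesis using MxLU_ge[OF u(1) e(1), of phi] flow_self[OF PD u(1)] e(2) by simp
qed

lemma psi_flow:
  assumes n: "n \<ge> 1" and u: "u \<in> VV n" "u \<noteq> 0"
  shows "flow (VV n) (EE n) (psi n u) u 0 =
         (\<lambda>v. if v \<notin> VV n then 0 else if v = u then 1 else if v = 0 then 1 else 1 / real n)"
    (is "_ = ?g")
proof (rule flow_eq[OF net psi_PD[OF n u] zeroV u(1)])
  show "flowP (VV n) (EE n) (psi n u) u 0 ?g"
    unfolding flowP_def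
  proof (intro conjI allI impI ballI)
    show "?g u = 1" using u by simp
  next
    fix v assume "v \<notin> VV n" then show "?g v = 0" by simp
  next
    fix v assume v: "v \<in> VV n" "v \<noteq> u"
    show "?g v = (\<Sum>e\<in>{e\<in>EE n. snd e = v}. ?g (fst e) * psi n u 0 e)"
    proof (cases "v = 0")
      case True
      have "(\<Sum>e\<in>{e\<in>EE n. snd e = v}. ?g (fst e) * psi n u 0 e)
          = (\<Sum>b\<in>VV n - {v}. ?g b * psi n u 0 (b,v))"
        by (subst in_sum[OF v(1)]) (simp only: fst_conv)
      also have "\<dots> = (\<Sum>b\<in>VV n - {v}. 1 / real n)"
      proof (rule sum.cong[OF refl])
        fix b assume b: "b \<in> VV n - {v}"
        show "?g b * psi n u 0 (b,v) = 1 / real n"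
          using b True u by (cases "b = u") (simp_all add: psi_def)
      qed
      also have "\<dots> = 1" using card_rm[OF v(1)] n by simp
      finally show ?thesis using True by simp
    next
      case False
      have "(\<Sum>e\<in>{e\<in>EE n. snd e = v}. ?g (fst e) * psi n u 0 e)
          = (\<Sum>b\<in>VV n - {v}. ?g b * psi n u 0 (b,v))"
        by (subst in_sum[OF v(1)]) (simp only: fst_conv)
      also have "\<dots> = (\<Sum>b\<in>VV n - {v}. if b = u then 1 / real n else 0)"
      proof (rule sum.cong[OF refl])
        fix b assume b: "b \<in> VV n - {v}"
        show "?g b * psi n u 0 (b,v) = (if b = u then 1 / real n else 0)"
          using b False v u by (cases "b = u"; cases "b = 0") (simp_all add: psi_def)
      qed
      also have "\<dots> = 1 / real n" using u v by (simp add: sum.delta)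
      finally show ?thesis using False v by simp
    qed
  qed
qed

lemma psi_MxLU:
  assumes n: "n \<ge> 1" and u: "u \<in> VV n" "u \<noteq> 0"
  shows "MxLU (VV n) (EE n) (\<lambda>_. 1) (psi n u) (DM n u) \<le> 1"
  unfolding MxLU_DM[OF u(1)] psi_flow[OF n u]
proof (rule Max.boundedI)
  show "finite ((\<lambda>e. real n * (if fst e \<notin> VV n then 0 else if fst e = u then 1 else if fst e = 0 then 1 else 1 / real n) * psi n u 0 e) ` EE n)"
    using finE by simp
  show "(\<lambda>e. real n * (if fst e \<notin> VV n then 0 else if fst e = u then 1 else if fst e = 0 then 1 else 1 / real n) * psi n u 0 e) ` EE n \<noteq> {}"
  proof -
    have "(u,0) \<in> EE n" using u by (simp add: EE_def VV_def)
    then show ?thesis by blast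
  qed
next
  fix x assume "x \<in> (\<lambda>e. real n * (if fst e \<notin> VV n then 0 else if fst e = u then 1 else if fst e = 0 then 1 else 1 / real n) * psi n u 0 e) ` EE n"
  then obtain a b where e: "(a,b) \<in> EE n" and x: "x = real n * (if a \<notin> VV n then 0 else if a = u then 1 else if a = 0 then 1 else 1 / real n) * psi n u 0 (a,b)"
    by auto
  have aV: "a \<in> VV n" using e by (auto simp: EE_def)
  show "x \<le> 1"
  proof -
    consider "a = u" | "a \<noteq> u" "a = 0" | "a \<noteq> u" "a \<noteq> 0" by blast
    then show ?thesis
    proof cases
      case 1 then show ?thesis using x aV n by (simp add: psi_def)
    next
      case 2 then show ?thesis using x aV u by (simp add: psi_def)
    next
      case 3 then show ?thesis using x aV n by (simp add: psi_def)
    qed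
  qed
qed

lemma OPTU_one:
  assumes n: "n \<ge> 1" and u: "u \<in> VV n" "u \<noteq> 0"
  shows "OPTU (VV n) (EE n) (\<lambda>_. 1) (DM n u) = 1"
proof -
  let ?S = "{MxLU (VV n) (EE n) (\<lambda>_. 1) phi (DM n u) | phi. PD_routing (VV n) (EE n) phi}"
  have mem: "MxLU (VV n) (EE n) (\<lambda>_. 1) (psi n u) (DM n u) \<in> ?S"
    using psi_PD[OF n u] by (intro CollectI exI[of _ "psi n u"] conjI refl)
  have lb: "1 \<le> x" if x: "x \<in> ?S" for x
  proof -
    from x obtain phi where phi: "x = MxLU (VV n) (EE n) (\<lambda>_. 1) phi (DM n u)" "PD_routing (VV n) (EE n) phi"
      by (elim CollectE exE conjE)
    show ?thesis using lower_1[OF phi(2) u n] phi(1) by simp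
  qed
  have bdd: "bdd_below ?S" by (rule bdd_belowI[of _ 1]) (rule lb)
  have "Inf ?S \<le> 1"
    using order_trans[OF cInf_lower[OF mem bdd] psi_MxLU[OF n u]] .
  moreover have "Inf ?S \<ge> 1" using mem lb by (intro cInf_greatest) auto
  ultimately show ?thesis unfolding OPTU_def by simp
qed


theorem theorem2:
  shows "\<exists>C::real. C > 0 \<and> (\<forall>N::nat. \<exists>V E c DD.
           network V E c \<and> card V \<ge> N \<and>
           (\<exists>phi. PD_routing V E phi) \<and>
           (\<forall>D\<in>DD. demand_matrix V D) \<and>
           (\<forall>phi. PD_routing V E phi \<longrightarrow> PERF V E c phi DD \<ge> ereal (C * real (card V))))"
proof (rule exI[of _ "1/2"], intro conjI allI)
  show "(1/2::real) > 0" by simp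
  fix N :: nat
  define n where "n = N + 1"
  have n: "n \<ge> 1" by (simp add: n_def)
  have cV: "card (VV n) = n + 1" by (simp add: VV_def)
  have u1: "1 \<in> VV n" "(1::nat) \<noteq> 0" using n by (auto simp: VV_def)
  show "\<exists>V E c DD. network V E c \<and> card V \<ge> N \<and>
           (\<exists>phi. PD_routing V E phi) \<and>
           (\<forall>D\<in>DD. demand_matrix V D) \<and>
           (\<forall>phi. PD_routing V E phi \<longrightarrow> PERF V E c phi DD \<ge> ereal (1/2 * real (card V)))"
  proof (intro exI[of _ "VV n"] exI[of _ "EE n"] exI[of _ "\<lambda>_. 1"] exI[of _ "DM n ` {1..n}"] conjI allI impI ballI)
    show "network (VV n) (EE n) (\<lambda>_. 1)" by (rule net)
    show "card (VV n) \<ge> N" using cV by (simp add: n_def)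
    show "\<exists>phi. PD_routing (VV n) (EE n) phi" using psi_PD[OF n u1] by blast
  next
    fix D assume "D \<in> DM n ` {1..n}"
    then show "demand_matrix (VV n) D" by (auto simp: demand_matrix_def DM_def)
  next
    fix phi assume PD: "PD_routing (VV n) (EE n) phi"
    obtain u where u: "u \<in> VV n" "u \<noteq> 0" "phi 0 (u,0) = 1" using sink[OF PD n] by blast
    have uD: "DM n u \<in> DM n ` {1..n}" using u by (auto simp: VV_def)
    have "ereal (1/2 * real (card (VV n))) \<le> ereal (real n)" using cV n by simp
    also have "\<dots> \<le> ereal (MxLU (VV n) (EE n) (\<lambda>_. 1) phi (DM n u) / OPTU (VV n) (EE n) (\<lambda>_. 1) (DM n u))"
      using lower_n[OF PD u] OPTU_one[OF n u(1,2)] by simp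
    also have "\<dots> \<le> PERF (VV n) (EE n) (\<lambda>_. 1) phi (DM n ` {1..n})"
      unfolding PERF_def by (rule SUP_upper[OF uD])
    finally show "PERF (VV n) (EE n) (\<lambda>_. 1) phi (DM n ` {1..n}) \<ge> ereal (1/2 * real (card (VV n)))" .
  qed
qed

end
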